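(* Let $m\ge1$ and work in $\Lambda^{\pm}_m=\mathbb Z[x_1^{\pm1},\dots,x_m^{\pm1}]^{S_m}$. (1) For every sequence of integers $\lambda=(\lambda_1,\dots,\lambda_m)$, $E_\lambda(x_1,\dots,x_m)=\det\big(H_{\lambda_i-i+j}\big)_{1\le i,j\le m}$. (2) For every sequence of integers $\lambda_1,\dots,\lambda_{m+1}$, $\det\big(H_{\lambda_i-i+j}\big)_{1\le i,j\le m+1}=0$ in $\Lambda^{\pm}_m$.
   Context: For a sequence of integers $\lambda=(\lambda_1,\dots,\lambda_m)$, $E_\lambda$ is defined by $E_\lambda(x)\prod_{i<j}(x_i-x_j)=\sum_{\sigma\in S_m}\mathrm{sgn}(\sigma)\sigma(x_1^{\lambda_1+m-1}x_2^{\lambda_2+m-2}\cdots x_m^{\lambda_m})$, and $H_k=E_{(k,0,\dots,0)}$ for $k\in\mathbb Z$. *)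

theory Defs
  imports "HOL-Library.Poly_Mapping" "HOL-Combinatorics.Permutations" "Jordan_Normal_Form.Determinant"
begin

text \<open>Laurent polynomials over Z in the variables x_0, x_1, ... : finitely supported
  functions from integer exponent vectors (finitely supported nat => int) to int,
  with the convolution product of Poly_Mapping. The variable x_(i+1) of the paper is
  index i here; in m variables only the indices 0..m-1 occur.\<close>

type_synonym laurent = "(nat \<Rightarrow>\<^sub>0 int) \<Rightarrow>\<^sub>0 int"

definition lmonom :: "(nat \<Rightarrow>\<^sub>0 int) \<Rightarrow> laurent" where
  "lmonom e = Poly_Mapping.single e 1"

definition lvar :: "nat \<Rightarrow> laurent" where
  "lvar i = lmonom (Poly_Mapping.single i 1)"

definition alternant :: "nat \<Rightarrow> (nat \<Rightarrow> int) \<Rightarrow> laurent" where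
  "alternant m a = (\<Sum>\<sigma> | \<sigma> permutes {..<m}.
      of_int (sign \<sigma>) * lmonom (\<Sum>i<m. Poly_Mapping.single (\<sigma> i) (a i)))"

definition vandermonde :: "nat \<Rightarrow> laurent" where
  "vandermonde m = (\<Prod>i<m. \<Prod>j\<in>{i<..<m}. lvar i - lvar j)"

definition E :: "nat \<Rightarrow> int list \<Rightarrow> laurent" where
  "E m lam = (THE p. p * vandermonde m =
      alternant m (\<lambda>i. lam ! i + int (m - 1 - i)))"

definition H :: "nat \<Rightarrow> int \<Rightarrow> laurent" where
  "H m k = E m (k # replicate (m - 1) 0)"

text \<open>The matrix (H_(lambda_i - i + j))_(i,j) of size n = length lam (0-based indices;
  the shift cancels in lambda_i - i + j).\<close>
definition JT_matrix :: "nat \<Rightarrow> int list \<Rightarrow> laurent mat" where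
  "JT_matrix m lam = mat (length lam) (length lam)
      (\<lambda>(i, j). H m (lam ! i - int i + int j))"

end

theory Submission
  imports Defs "HOL-Computational_Algebra.Polynomial"
begin


definition xp :: "nat \<Rightarrow> int \<Rightarrow> laurent" where
  "xp j a = lmonom (Poly_Mapping.single j a)"

lemma lmonom_add: "lmonom (e + f) = lmonom e * lmonom f"
  by (simp add: lmonom_def mult_single)

lemma lmonom_0: "lmonom 0 = 1"
  by (simp add: lmonom_def)

lemma lmonom_sum: "lmonom (\<Sum>i\<in>A. f i) = (\<Prod>i\<in>A. lmonom (f i))"
  by (induction A rule: infinite_finite_induct) (auto simp: lmonom_0 lmonom_add)

lemma xp_add: "xp j (a + b) = xp j a * xp j b"
  by (simp add: xp_def single_add lmonom_add)

lemma xp_0: "xp j 0 = 1"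
  by (simp add: xp_def lmonom_0)

lemma xp_nat: "xp j (int n) = lvar j ^ n"
  by (induction n) (auto simp: xp_0 xp_add lvar_def xp_def[symmetric])

lemma xp_inv: "xp j a * xp j (- a) = 1"
  by (simp add: xp_add[symmetric] xp_0)

lemma lvar_inj: "lvar i = lvar j \<Longrightarrow> i = j"
  unfolding lvar_def lmonom_def
  by (metis inj_single injD lookup_single_eq lookup_single_not_eq zero_neq_one)

lemma lvar_nz: "lvar i \<noteq> 0"
  unfolding lvar_def lmonom_def by (metis lookup_single_eq lookup_zero zero_neq_one)

definition Xm :: "nat \<Rightarrow> (nat \<Rightarrow> int) \<Rightarrow> laurent mat" where
  "Xm m a = mat m m (\<lambda>(i, j). xp j (a i))"

lemma alternant_det: "alternant m a = det (Xm m a)"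
proof -
  have "alternant m a = (\<Sum>p | p permutes {0..<m}. of_int (sign p) * (\<Prod>i = 0..<m. Xm m a $$ (i, p i)))"
    unfolding alternant_def
    by (intro sum.cong) (auto simp: atLeast0LessThan lmonom_sum Xm_def xp_def permutes_def)
  then show ?thesis by (simp add: det_def Xm_def)
qed



lemma prod_list_map_upt: "prod_list (map f [0..<n]) = prod f {..<n}"
  by (metis atLeast_upt distinct_upt prod.distinct_set_conv_list)

lemma det_diag_like:
  fixes d :: "nat \<Rightarrow> 'a::comm_ring_1"
  shows "det (mat n n (\<lambda>(i,j). if i = j then d j else 0)) = (\<Prod>j<n. d j)"
proof -
  have "det (mat n n (\<lambda>(i,j). if i = j then d j else 0)) = prod_list (diag_mat (mat n n (\<lambda>(i,j). if i = j then d j else 0)))"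
    by (rule det_upper_triangular) (auto simp: upper_triangular_def)
  also have "\<dots> = (\<Prod>j<n. d j)"
    by (simp add: diag_mat_def prod_list_map_upt lessThan_atLeast0)
  finally show ?thesis .
qed

lemma vdm:
  fixes y :: "nat \<Rightarrow> 'a::comm_ring_1"
  shows "det (mat n n (\<lambda>(i,j). y j ^ (n-1-i))) = (\<Prod>i<n. \<Prod>j\<in>{i<..<n}. y i - y j)"
proof (induction n)
  case 0
  then show ?case by (simp add: det_def)
next
  case (Suc n)
  define M where "M = mat (Suc n) (Suc n) (\<lambda>(i,j). y j ^ (Suc n-1-i))"
  define L :: "'a mat" where "L = mat (Suc n) (Suc n) (\<lambda>(i,k). if k = i then 1 else if k = Suc i then - y n else 0)"
  define M' where "M' = mat (Suc n) (Suc n) (\<lambda>(i,j). if i < n then y j ^ (n-1-i) * (y j - y n) else 1)"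
  have detL: "det L = 1"
  proof -
    have "det L = prod_list (diag_mat L)"
      by (rule det_upper_triangular) (auto simp: upper_triangular_def L_def)
    also have "\<dots> = 1"
      by (simp add: diag_mat_def L_def prod_list_map_upt)
    finally show ?thesis .
  qed
  have LM: "L * M = M'"
  proof (rule eq_matI)
    fix i j assume ij: "i < dim_row M'" "j < dim_col M'"
    then have i: "i < Suc n" and j: "j < Suc n" by (auto simp: M'_def)
    have "(L * M) $$ (i, j) = (\<Sum>k<Suc n. L $$ (i,k) * M $$ (k,j))"
      using i j by (simp add: L_def M_def scalar_prod_def lessThan_atLeast0 times_mat_def)
    also have "\<dots> = M' $$ (i, j)"
    proof (cases "i < n")
      case True
      have "(\<Sum>k<Suc n. L $$ (i,k) * M $$ (k,j)) = (\<Sum>k<Suc n. (if k = i then y j ^ (n - i) else 0) + (if k = Suc i then - y n * y j ^ (n - Suc i) else 0))"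
        using True j by (intro sum.cong) (auto simp: L_def M_def)
      also have "\<dots> = y j ^ (n - i) - y n * y j ^ (n - Suc i)"
        using True by (simp add: sum.distrib)
      also have "\<dots> = y j ^ (n-1-i) * (y j - y n)"
      proof -
        obtain t where t: "n - i = Suc t" "n - Suc i = t" "n - 1 - i = t" using True
          by (metis Suc_diff_Suc diff_Suc_eq_diff_pred)
        show ?thesis unfolding t by (simp add: algebra_simps)
      qed
      finally show ?thesis using True i j by (simp add: M'_def)
    next
      case False
      then have "i = n" using i by auto
      have "(\<Sum>k<Suc n. L $$ (i,k) * M $$ (k,j)) = (\<Sum>k<Suc n. if k = n then 1 else 0)"
        using \<open>i = n\<close> j by (intro sum.cong) (auto simp: L_def M_def)
      also have "\<dots> = 1" by simp
      finally show ?thesis using \<open>i = n\<close> j by (simp add: M'_def)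
    qed
    finally show "(L * M) $$ (i, j) = M' $$ (i, j)" .
  qed (auto simp: L_def M_def M'_def)
  have "det M = det M'"
  proof -
    have "det (L * M) = det L * det M"
      by (rule det_mult) (auto simp: L_def M_def)
    then show ?thesis using LM detL by simp
  qed
  also have "det M' = (\<Sum>i<Suc n. M' $$ (i, n) * cofactor M' i n)"
    by (rule laplace_expansion_column) (auto simp: M'_def)
  also have "\<dots> = (\<Sum>i<Suc n. if i = n then cofactor M' n n else 0)"
    by (intro sum.cong) (auto simp: M'_def)
  also have "\<dots> = det (mat_delete M' n n)"
    by (simp add: cofactor_def)
  also have "mat_delete M' n n = mat n n (\<lambda>(i,j). y j ^ (n-1-i)) * mat n n (\<lambda>(i,j). if i = j then y j - y n else 0)"
  proof (rule eq_matI)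
    fix i j assume "i < dim_row (mat n n (\<lambda>(i,j). y j ^ (n-1-i)) * mat n n (\<lambda>(i,j). if i = j then y j - y n else 0))"
      "j < dim_col (mat n n (\<lambda>(i,j). y j ^ (n-1-i)) * mat n n (\<lambda>(i,j). if i = j then y j - y n else 0))"
    then have i: "i < n" and j: "j < n" by auto
    have "(mat n n (\<lambda>(i,j). y j ^ (n-1-i)) * mat n n (\<lambda>(i,j). if i = j then y j - y n else 0)) $$ (i,j)
       = (\<Sum>k\<in>{0..<n}. y k ^ (n-1-i) * (if k = j then y j - y n else 0))"
      using i j by (simp add: scalar_prod_def times_mat_def)
    also have "\<dots> = y j ^ (n-1-i) * (y j - y n)"
      using j by (simp add: if_distrib cong: if_cong)
    finally show "mat_delete M' n n $$ (i, j) = (mat n n (\<lambda>(i,j). y j ^ (n-1-i)) * mat n n (\<lambda>(i,j). if i = j then y j - y n else 0)) $$ (i,j)"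
      using i j by (simp add: mat_delete_def M'_def)
  qed (auto simp: mat_delete_def M'_def)
  also have "det \<dots> = (\<Prod>i<n. \<Prod>j\<in>{i<..<n}. y i - y j) * (\<Prod>j<n. y j - y n)"
    by (subst det_mult[of _ n]) (use Suc.IH in \<open>auto simp: det_diag_like\<close>)
  also have "\<dots> = (\<Prod>i<Suc n. \<Prod>j\<in>{i<..<Suc n}. y i - y j)"
  proof -
    have "(\<Prod>i<Suc n. \<Prod>j\<in>{i<..<Suc n}. y i - y j) = (\<Prod>i<n. \<Prod>j\<in>{i<..<Suc n}. y i - y j)"
    proof -
      have "{n<..<Suc n} = {}" by auto
      then show ?thesis by simp
    qed
    also have "\<dots> = (\<Prod>i<n. (y i - y n) * (\<Prod>j\<in>{i<..<n}. y i - y j))"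
    proof (intro prod.cong refl)
      fix i assume "i \<in> {..<n}"
      then have "{i<..<Suc n} = insert n {i<..<n}" by auto
      then show "(\<Prod>j\<in>{i<..<Suc n}. y i - y j) = (y i - y n) * (\<Prod>j\<in>{i<..<n}. y i - y j)" by simp
    qed
    finally show ?thesis by (simp add: prod.distrib mult.commute)
  qed
  finally show ?case by (simp add: M_def)
qed



definition PP :: "nat \<Rightarrow> laurent poly" where
  "PP m = (\<Prod>i<m. [:- lvar i, 1:])"

lemma PP_root: "j < m \<Longrightarrow> poly (PP m) (lvar j) = 0"
  by (auto simp: PP_def poly_prod)

lemma PP_lead: "lead_coeff (PP m) = 1"
  by (simp add: PP_def lead_coeff_prod)

lemma PP_degree: "degree (PP m) = m"
  by (simp add: PP_def degree_prod_sum_eq)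

lemma xp_neg_pow: "xp j (- int n) = xp j (-1) ^ n"
proof (induction n)
  case 0 then show ?case by (simp add: xp_0)
next
  case (Suc n)
  have "xp j (- int (Suc n)) = xp j (-1) * xp j (- int n)"
    by (simp add: xp_add[symmetric])
  then show ?case using Suc by simp
qed

lemma lvar_xp_inv: "lvar j * xp j (-1) = 1"
  using xp_inv[of j 1] xp_nat[of j 1] by simp

lemma inv_poly_ex: "\<exists>G. \<forall>j<m. poly G (lvar j) = xp j (-1)"
proof -
  obtain c Q where PQ: "PP m = pCons c Q" by (cases "PP m") auto
  have c: "c = (\<Prod>i<m. - lvar i)"
  proof -
    have "c = poly (PP m) 0" using PQ by simp
    then show ?thesis by (simp add: PP_def poly_prod)
  qed
  define u where "u = (\<Prod>i<m. - xp i (-1))"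
  have cu: "c * u = 1"
    unfolding c u_def prod.distrib[symmetric] by (simp add: lvar_xp_inv)
  define G where "G = Polynomial.smult (- u) Q"
  have "poly G (lvar j) = xp j (-1)" if j: "j < m" for j
  proof -
    have "0 = c + lvar j * poly Q (lvar j)" using PP_root[OF j] PQ by simp
    then have e: "lvar j * poly Q (lvar j) = - c" by (simp add: add_eq_0_iff)
    have "lvar j * poly G (lvar j) = - u * (lvar j * poly Q (lvar j))"
      by (simp add: G_def algebra_simps)
    also have "\<dots> = c * u" by (simp add: e)
    finally have "lvar j * poly G (lvar j) = 1" using cu by simp
    then have "lvar j * poly G (lvar j) = lvar j * xp j (-1)" by (simp add: lvar_xp_inv)
    then show ?thesis using lvar_nz by simp
  qed
  then show ?thesis by blast
qed

lemma eval_poly_ex: "\<exists>F. \<forall>j<m. poly F (lvar j) = xp j a"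
proof (cases "a \<ge> 0")
  case True
  then have "\<forall>j<m. poly (monom 1 (nat a)) (lvar j) = xp j a"
    by (simp add: poly_monom xp_nat[symmetric])
  then show ?thesis by blast
next
  case False
  obtain G where G: "\<forall>j<m. poly G (lvar j) = xp j (-1)" using inv_poly_ex by blast
  have a: "a = - int (nat (-a))" using False by simp
  have "\<forall>j<m. poly (G ^ nat (-a)) (lvar j) = xp j a"
  proof (intro allI impI)
    fix j assume "j < m"
    then have "poly (G ^ nat (-a)) (lvar j) = xp j (-1) ^ nat (-a)" using G by (simp add: poly_power)
    also have "\<dots> = xp j (- int (nat (-a)))" by (simp only: xp_neg_pow)
    also have "\<dots> = xp j a" using a by simp
    finally show "poly (G ^ nat (-a)) (lvar j) = xp j a" .
  qed
  then show ?thesis by blast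
qed

lemma red_ex: assumes "m \<ge> 1" shows "\<exists>R. degree R < m \<and> (\<forall>j<m. poly R (lvar j) = xp j a)"
proof -
  obtain F where F: "\<forall>j<m. poly F (lvar j) = xp j a" using eval_poly_ex by blast
  obtain q r where qr: "pseudo_divmod F (PP m) = (q, r)" by fastforce
  have nz: "PP m \<noteq> 0" using PP_lead by (metis leading_coeff_0_iff zero_neq_one)
  have "F = PP m * q + r" using pseudo_divmod(1)[OF nz qr] by (simp add: PP_lead)
  moreover have "degree r < m" using pseudo_divmod(2)[OF nz qr] assms PP_degree by auto
  ultimately show ?thesis using F PP_root by (intro exI[of _ r]) auto
qed

lemma interp_unique:
  assumes "degree (D :: laurent poly) < m" "\<forall>j<m. poly D (lvar j) = 0"
  shows "D = 0"
proof (rule ccontr)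
  assume D: "D \<noteq> 0"
  have "lvar ` {..<m} \<subseteq> {x. poly D x = 0}" using assms(2) by auto
  moreover have "card (lvar ` {..<m}) = m"
    by (subst card_image) (auto intro: inj_onI lvar_inj)
  ultimately have "m \<le> card {x. poly D x = 0}"
    using card_mono[OF poly_roots_finite[OF D]] by metis
  also have "\<dots> \<le> degree D" by (rule card_poly_roots_bound[OF D])
  finally show False using assms(1) by simp
qed



definition red :: "nat \<Rightarrow> int \<Rightarrow> laurent poly" where
  "red m a = (SOME R. degree R < m \<and> (\<forall>j<m. poly R (lvar j) = xp j a))"

lemma red: assumes "m \<ge> 1" shows "degree (red m a) < m" "\<And>j. j < m \<Longrightarrow> poly (red m a) (lvar j) = xp j a"
proof -
  have "degree (red m a) < m \<and> (\<forall>j<m. poly (red m a) (lvar j) = xp j a)"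
    unfolding red_def by (rule someI_ex[OF red_ex[OF assms]])
  then show "degree (red m a) < m" "\<And>j. j < m \<Longrightarrow> poly (red m a) (lvar j) = xp j a" by auto
qed

lemma red_unique:
  assumes "m \<ge> 1" "degree R < m" "\<And>j. j < m \<Longrightarrow> poly R (lvar j) = xp j a"
  shows "red m a = R"
proof -
  have "degree (red m a - R) < m"
    using red(1)[OF assms(1), of a] assms(2) degree_diff_le_max[of "red m a" R] by (meson le_less_trans max_less_iff_conj)
  moreover have "\<forall>j<m. poly (red m a - R) (lvar j) = 0"
    using red(2)[OF assms(1)] assms(3) by simp
  ultimately have "red m a - R = 0" by (rule interp_unique)
  then show ?thesis by simp
qed

lemma red_small: assumes "l < m" shows "red m (int l) = monom 1 l"
proof -
  have "m \<ge> 1" using assms by simp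
  then show ?thesis
    by (rule red_unique) (auto simp: degree_monom_eq assms poly_monom xp_nat)
qed

lemma poly_sum_lt:
  assumes "degree (p :: laurent poly) < m"
  shows "poly p x = (\<Sum>l<m. coeff p l * x ^ l)"
proof -
  have "poly p x = (\<Sum>l\<le>degree p. coeff p l * x ^ l)" by (simp add: poly_altdef)
  also have "\<dots> = (\<Sum>l<m. coeff p l * x ^ l)"
    by (rule sum.mono_neutral_left) (use assms in \<open>auto simp: coeff_eq_0\<close>)
  finally show ?thesis .
qed

lemma red_shift:
  assumes m: "m \<ge> 1"
  shows "red m (a + int b) = (\<Sum>l<m. Polynomial.smult (coeff (red m a) l) (red m (int l + int b)))"
proof (rule red_unique[OF m])
  show "degree (\<Sum>l<m. Polynomial.smult (coeff (red m a) l) (red m (int l + int b))) < m"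
  proof -
    have "degree (\<Sum>l<m. Polynomial.smult (coeff (red m a) l) (red m (int l + int b))) \<le> m - 1"
    proof (rule degree_sum_le)
      fix l assume "l \<in> {..<m}"
      show "degree (Polynomial.smult (coeff (red m a) l) (red m (int l + int b))) \<le> m - 1"
        using red(1)[OF m, of "int l + int b"] degree_smult_le[of "coeff (red m a) l" "red m (int l + int b)"] by linarith
    qed simp
    then show ?thesis using m by linarith
  qed
next
  fix j assume j: "j < m"
  have "poly (\<Sum>l<m. Polynomial.smult (coeff (red m a) l) (red m (int l + int b))) (lvar j)
      = (\<Sum>l<m. coeff (red m a) l * xp j (int l + int b))"
    using red(2)[OF m j] by (simp add: poly_sum)
  also have "\<dots> = (\<Sum>l<m. coeff (red m a) l * lvar j ^ l) * xp j (int b)"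
    by (simp add: xp_add xp_nat sum_distrib_right sum_distrib_left mult_ac)
  also have "\<dots> = xp j a * xp j (int b)"
    using poly_sum_lt[OF red(1)[OF m], of a "lvar j"] red(2)[OF m j, of a] by simp
  also have "\<dots> = xp j (a + int b)" by (simp add: xp_add)
  finally show "poly (\<Sum>l<m. Polynomial.smult (coeff (red m a) l) (red m (int l + int b))) (lvar j) = xp j (a + int b)" .
qed



definition Cm :: "nat \<Rightarrow> (nat \<Rightarrow> int) \<Rightarrow> laurent mat" where
  "Cm m a = mat m m (\<lambda>(i, l). coeff (red m (a i)) (m - 1 - l))"

lemma red_small_coeff: "n < m \<Longrightarrow> coeff (red m (int n)) k = (if n = k then 1 else 0)"
  by (simp add: red_small coeff_monom)

lemma alt_factor:
  assumes m: "m \<ge> 1"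
  shows "Xm m a = Cm m a * Xm m (\<lambda>i. int (m - 1 - i))"
proof (rule eq_matI)
  fix i j assume "i < dim_row (Cm m a * Xm m (\<lambda>i. int (m - 1 - i)))" "j < dim_col (Cm m a * Xm m (\<lambda>i. int (m - 1 - i)))"
  then have i: "i < m" and j: "j < m" by (auto simp: Cm_def Xm_def)
  have "(Cm m a * Xm m (\<lambda>i. int (m - 1 - i))) $$ (i, j) = (\<Sum>l<m. coeff (red m (a i)) (m - Suc l) * lvar j ^ (m - Suc l))"
    using i j by (simp add: Cm_def Xm_def scalar_prod_def times_mat_def xp_nat lessThan_atLeast0)
  also have "\<dots> = (\<Sum>l<m. coeff (red m (a i)) l * lvar j ^ l)"
    by (rule sum.nat_diff_reindex)
  also have "\<dots> = xp j (a i)"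
    using poly_sum_lt[OF red(1)[OF m], of "a i" "lvar j"] red(2)[OF m j] by simp
  finally show "Xm m a $$ (i, j) = (Cm m a * Xm m (\<lambda>i. int (m - 1 - i))) $$ (i, j)"
    using i j by (simp add: Xm_def)
qed (auto simp: Xm_def Cm_def)

lemma det_Xdelta: "det (Xm m (\<lambda>i. int (m - 1 - i))) = vandermonde m"
proof -
  have "Xm m (\<lambda>i. int (m - 1 - i)) = mat m m (\<lambda>(i,j). lvar j ^ (m-1-i))"
    by (rule eq_matI) (auto simp: Xm_def xp_nat)
  then show ?thesis using vdm[where y=lvar and n=m] by (simp add: vandermonde_def)
qed

lemma alt_eq: assumes "m \<ge> 1" shows "alternant m a = det (Cm m a) * vandermonde m"
proof -
  have "alternant m a = det (Cm m a * Xm m (\<lambda>i. int (m - 1 - i)))"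
    by (subst alt_factor[OF assms, symmetric]) (simp add: alternant_det)
  also have "\<dots> = det (Cm m a) * det (Xm m (\<lambda>i. int (m - 1 - i)))"
    by (rule det_mult) (auto simp: Cm_def Xm_def)
  finally show ?thesis by (simp only: det_Xdelta)
qed

lemma vandermonde_nz: "vandermonde m \<noteq> 0"
proof -
  have "lvar i - lvar j \<noteq> 0" if "i < j" for i j
    using that lvar_inj[of i j] by auto
  then have "(\<Prod>j\<in>{i<..<m}. lvar i - lvar j) \<noteq> 0" for i
    by (subst prod_zero_iff) auto
  then show ?thesis unfolding vandermonde_def by (subst prod_zero_iff) auto
qed

lemma E_eq: assumes "m \<ge> 1" shows "E m lam = det (Cm m (\<lambda>i. lam ! i + int (m - 1 - i)))"
  unfolding E_def
proof (rule the_equality)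
  show "det (Cm m (\<lambda>i. lam ! i + int (m - 1 - i))) * vandermonde m = alternant m (\<lambda>i. lam ! i + int (m - 1 - i))"
    by (simp add: alt_eq[OF assms])
next
  fix p assume "p * vandermonde m = alternant m (\<lambda>i. lam ! i + int (m - 1 - i))"
  then have "p * vandermonde m = det (Cm m (\<lambda>i. lam ! i + int (m - 1 - i))) * vandermonde m"
    by (simp add: alt_eq[OF assms])
  then show "p = det (Cm m (\<lambda>i. lam ! i + int (m - 1 - i)))"
    by (rule mult_right_cancel[OF vandermonde_nz, THEN iffD1])
qed



lemma H_eq:
  assumes m: "m \<ge> 1"
  shows "H m k = coeff (red m (k + int (m - 1))) (m - 1)"
proof -
  define lam where "lam = k # replicate (m - 1) (0::int)"
  define a where "a = (\<lambda>i. lam ! i + int (m - 1 - i))"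
  have a0: "a 0 = k + int (m - 1)" by (simp add: a_def lam_def)
  have ai: "a i = int (m - 1 - i)" if "0 < i" "i < m" for i
    using that by (simp add: a_def lam_def nth_Cons')
  have ut: "upper_triangular (Cm m a)"
    unfolding upper_triangular_def
  proof (intro allI impI)
    fix i l assume "i < dim_row (Cm m a)" "l < i"
    then have il: "i < m" "l < i" "0 < i" by (auto simp: Cm_def)
    have "Cm m a $$ (i, l) = coeff (red m (a i)) (m - 1 - l)" using il by (simp add: Cm_def)
    also have "\<dots> = coeff (red m (int (m - 1 - i))) (m - 1 - l)" using il by (simp only: ai)
    also have "\<dots> = (if m - 1 - i = m - 1 - l then 1 else 0)" by (rule red_small_coeff) (use il in auto)
    also have "\<dots> = 0" using il by auto
    finally show "Cm m a $$ (i, l) = 0" .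
  qed
  have "det (Cm m a) = prod_list (diag_mat (Cm m a))"
    by (rule det_upper_triangular[OF ut, of m]) (simp add: Cm_def)
  also have "\<dots> = (\<Prod>i<m. Cm m a $$ (i, i))"
    by (simp add: diag_mat_def prod_list_map_upt Cm_def)
  also have "\<dots> = (\<Prod>i<m. if i = 0 then coeff (red m (k + int (m - 1))) (m - 1) else 1)"
  proof (intro prod.cong refl)
    fix i assume i: "i \<in> {..<m}"
    show "Cm m a $$ (i, i) = (if i = 0 then coeff (red m (k + int (m - 1))) (m - 1) else 1)"
    proof (cases "i = 0")
      case True then show ?thesis using i a0 by (simp add: Cm_def)
    next
      case False
      have "Cm m a $$ (i, i) = coeff (red m (a i)) (m - 1 - i)" using i by (simp add: Cm_def)
      also have "\<dots> = coeff (red m (int (m - 1 - i))) (m - 1 - i)"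
      proof -
        have "a i = int (m - 1 - i)" using ai i False by auto
        then show ?thesis by (simp only:)
      qed
      also have "\<dots> = 1" by (subst red_small_coeff) (use i in auto)
      finally show ?thesis using False by simp
    qed
  qed
  also have "\<dots> = coeff (red m (k + int (m - 1))) (m - 1)"
    using m by (cases m) (simp_all add: prod.lessThan_Suc_shift)
  finally have "det (Cm m a) = coeff (red m (k + int (m - 1))) (m - 1)" .
  moreover have "H m k = det (Cm m a)"
    unfolding a_def H_def lam_def[symmetric] E_eq[OF m] ..
  ultimately show ?thesis by simp
qed

lemma JT_entry:
  assumes m: "m \<ge> 1"
  shows "coeff (red m (c + int j)) (m - 1) = (\<Sum>l<m. coeff (red m c) (m - 1 - l) * coeff (red m (int (m - 1 - l) + int j)) (m - 1))"
proof -
  have "coeff (red m (c + int j)) (m - 1) = (\<Sum>l<m. coeff (red m c) l * coeff (red m (int l + int j)) (m - 1))"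
    by (subst red_shift[OF m]) (simp add: coeff_sum)
  also have "\<dots> = (\<Sum>l<m. coeff (red m c) (m - Suc l) * coeff (red m (int (m - Suc l) + int j)) (m - 1))"
    by (rule sum.nat_diff_reindex[symmetric])
  finally show ?thesis by simp
qed

definition Bm :: "nat \<Rightarrow> nat \<Rightarrow> laurent mat" where
  "Bm n m = mat n n (\<lambda>(l, j). if l < m then coeff (red m (int (m - 1 - l) + int j)) (m - 1) else 0)"



lemma Bm_coeff:
  assumes "l < m" "j \<le> l"
  shows "coeff (red m (int (m - 1 - l) + int j)) (m - 1) = (if j = l then 1 else 0)"
proof -
  have "int (m - 1 - l) + int j = int (m - 1 - l + j)" by simp
  then have "coeff (red m (int (m - 1 - l) + int j)) (m - 1) = coeff (red m (int (m - 1 - l + j))) (m - 1)"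
    by (simp only:)
  also have "\<dots> = (if m - 1 - l + j = m - 1 then 1 else 0)"
    by (rule red_small_coeff) (use assms in auto)
  also have "\<dots> = (if j = l then 1 else 0)" using assms by auto
  finally show ?thesis .
qed

lemma det_Bm: "det (Bm m m) = 1"
proof -
  have ut: "upper_triangular (Bm m m)"
    unfolding upper_triangular_def
  proof (intro allI impI)
    fix i l assume "i < dim_row (Bm m m)" "l < i"
    then have il: "i < m" "l < i" by (auto simp: Bm_def)
    then show "Bm m m $$ (i, l) = 0" using Bm_coeff[of i m l] by (simp add: Bm_def)
  qed
  have "det (Bm m m) = prod_list (diag_mat (Bm m m))"
    by (rule det_upper_triangular[OF ut, of m]) (simp add: Bm_def)
  also have "\<dots> = (\<Prod>i<m. Bm m m $$ (i, i))"
    by (simp add: diag_mat_def prod_list_map_upt Bm_def)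
  also have "\<dots> = (\<Prod>i<m. 1)"
  proof (intro prod.cong refl)
    fix i assume "i \<in> {..<m}"
    then show "Bm m m $$ (i, i) = 1" using Bm_coeff[of i m i] by (simp add: Bm_def)
  qed
  finally show ?thesis by simp
qed

definition Cg :: "nat \<Rightarrow> nat \<Rightarrow> int list \<Rightarrow> laurent mat" where
  "Cg n m lam = mat n n (\<lambda>(i, l). if l < m then coeff (red m (lam ! i - int i + int (m - 1))) (m - 1 - l) else 0)"

lemma JT_prod:
  assumes m: "m \<ge> 1" and n: "m \<le> length lam"
  shows "JT_matrix m lam = Cg (length lam) m lam * Bm (length lam) m"
proof (rule eq_matI)
  fix i j assume "i < dim_row (Cg (length lam) m lam * Bm (length lam) m)" "j < dim_col (Cg (length lam) m lam * Bm (length lam) m)"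
  then have i: "i < length lam" and j: "j < length lam" by (auto simp: Cg_def Bm_def)
  define c where "c = lam ! i - int i + int (m - 1)"
  have "JT_matrix m lam $$ (i, j) = H m (lam ! i - int i + int j)"
    using i j by (simp add: JT_matrix_def)
  also have "\<dots> = coeff (red m (c + int j)) (m - 1)"
  proof -
    have "lam ! i - int i + int j + int (m - 1) = c + int j" by (simp add: c_def)
    then show ?thesis by (simp only: H_eq[OF m])
  qed
  also have "\<dots> = (\<Sum>l<m. coeff (red m c) (m - 1 - l) * coeff (red m (int (m - 1 - l) + int j)) (m - 1))"
    by (rule JT_entry[OF m])
  also have "\<dots> = (\<Sum>l\<in>{0..<length lam}. Cg (length lam) m lam $$ (i, l) * Bm (length lam) m $$ (l, j))"
  proof -
    have "(\<Sum>l\<in>{0..<length lam}. Cg (length lam) m lam $$ (i, l) * Bm (length lam) m $$ (l, j))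
        = (\<Sum>l\<in>{..<m}. Cg (length lam) m lam $$ (i, l) * Bm (length lam) m $$ (l, j))"
      by (rule sum.mono_neutral_right) (use n i j in \<open>auto simp: Cg_def Bm_def\<close>)
    also have "\<dots> = (\<Sum>l<m. coeff (red m c) (m - 1 - l) * coeff (red m (int (m - 1 - l) + int j)) (m - 1))"
      by (intro sum.cong refl) (use n i j in \<open>auto simp: Cg_def Bm_def c_def\<close>)
    finally show ?thesis by simp
  qed
  also have "\<dots> = (Cg (length lam) m lam * Bm (length lam) m) $$ (i, j)"
    using i j by (simp add: times_mat_def scalar_prod_def Cg_def Bm_def)
  finally show "JT_matrix m lam $$ (i, j) = (Cg (length lam) m lam * Bm (length lam) m) $$ (i, j)" .
qed (auto simp: JT_matrix_def Cg_def Bm_def)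

lemma part1:
  assumes m: "m \<ge> 1" and len: "length lam = m"
  shows "E m lam = det (JT_matrix m lam)"
proof -
  have "det (JT_matrix m lam) = det (Cg m m lam * Bm m m)"
    using JT_prod[OF m] len by simp
  also have "\<dots> = det (Cg m m lam) * det (Bm m m)"
    by (rule det_mult) (auto simp: Cg_def Bm_def)
  also have "Cg m m lam = Cm m (\<lambda>i. lam ! i + int (m - 1 - i))"
  proof (rule eq_matI)
    fix i l assume "i < dim_row (Cm m (\<lambda>i. lam ! i + int (m - 1 - i)))" "l < dim_col (Cm m (\<lambda>i. lam ! i + int (m - 1 - i)))"
    then have i: "i < m" and l: "l < m" by (auto simp: Cm_def)
    have eq: "lam ! i - int i + int (m - 1) = lam ! i + int (m - 1 - i)" using i by simp
    have "Cg m m lam $$ (i, l) = coeff (red m (lam ! i - int i + int (m - 1))) (m - 1 - l)"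
      using i l by (simp add: Cg_def)
    also have "\<dots> = coeff (red m (lam ! i + int (m - 1 - i))) (m - 1 - l)"
      by (simp only: eq)
    also have "\<dots> = Cm m (\<lambda>i. lam ! i + int (m - 1 - i)) $$ (i, l)"
      using i l by (simp add: Cm_def)
    finally show "Cg m m lam $$ (i, l) = Cm m (\<lambda>i. lam ! i + int (m - 1 - i)) $$ (i, l)" .
  qed (auto simp: Cg_def Cm_def)
  finally show ?thesis by (simp add: det_Bm E_eq[OF m])
qed

lemma part2:
  assumes m: "m \<ge> 1" and len: "length lam = m + 1"
  shows "det (JT_matrix m lam) = 0"
proof -
  have "det (JT_matrix m lam) = det (Cg (m+1) m lam * Bm (m+1) m)"
    using JT_prod[OF m] len by simp
  also have "\<dots> = det (Cg (m+1) m lam) * det (Bm (m+1) m)"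
    by (rule det_mult) (auto simp: Cg_def Bm_def)
  also have "det (Cg (m+1) m lam) = 0"
  proof -
    have "det (Cg (m+1) m lam) = (\<Sum>i<m+1. Cg (m+1) m lam $$ (i, m) * cofactor (Cg (m+1) m lam) i m)"
      by (rule laplace_expansion_column) (auto simp: Cg_def)
    also have "\<dots> = 0" by (intro sum.neutral) (auto simp: Cg_def)
    finally show ?thesis .
  qed
  finally show ?thesis by simp
qed

theorem mainTheorem3:
  fixes m :: nat
  assumes "m \<ge> 1"
  shows "(\<forall>lam :: int list. length lam = m \<longrightarrow> E m lam = det (JT_matrix m lam))
       \<and> (\<forall>lam :: int list. length lam = m + 1 \<longrightarrow> det (JT_matrix m lam) = 0)"
  using part1[OF assms] part2[OF assms] by blast


end
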